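(* Let $(\mathcal{S},\mathcal{R})$ be an $r$-complete positive presentation satisfying: (C$_r$) $\mathcal{R}$ contains no relation $su=sv$ with $s\in\mathcal{S}$ and $u\neq v$; (E$_r$) there exists a set $\mathcal{S}'$ with $\mathcal{S}\subseteq\mathcal{S}'\subseteq\mathcal{S}^*$ such that for all $u,v\in\mathcal{S}'$ there exist $u',v'\in\mathcal{S}'$ satisfying $(uv')^{-1}(vu')\curvearrowright_r\varepsilon$. Then: (i) for all words $\mathbf{w},\mathbf{w}'$ on $\mathcal{S}\cup\mathcal{S}^{-1}$, $\mathbf{w}\equiv^{\pm}\mathbf{w}'$ holds if and only if there exist $u,v,w,u',v',w'\in\mathcal{S}^*$ with $\mathbf{w}\curvearrowright_r vu^{-1}$, $\mathbf{w}'\curvearrowright_r v'u'^{-1}$, $uw\equiv u'w'$ and $vw\equiv v'w'$; (ii) for all $u,u'\in\mathcal{S}^*$, $u\equiv^{\pm}u'$ holds if and only if there exists $w\in\mathcal{S}^*$ with $uw\equiv u'w$.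
   Context: A positive presentation is a pair $(\mathcal{S},\mathcal{R})$ where $\mathcal{S}$ is a nonempty set of letters and $\mathcal{R}$ is a family of relations $u=v$, i.e. unordered pairs $\{u,v\}$ of nonempty words in the free monoid $\mathcal{S}^*$ (letters are regarded as length-one words). $\varepsilon$ denotes the empty word; $\equiv$ is the smallest congruence on $\mathcal{S}^*$ containing all pairs of $\mathcal{R}$. Let $\mathcal{S}^{-1}=\{s^{-1}:s\in\mathcal{S}\}$ be a disjoint copy of $\mathcal{S}$; $\equiv^{\pm}$ is the smallest congruence on $(\mathcal{S}\cup\mathcal{S}^{-1})^*$ containing all pairs of $\mathcal{R}$ and all pairs $\{ss^{-1},\varepsilon\}$, $\{s^{-1}s,\varepsilon\}$ for $s\in\mathcal{S}$. For $u\in\mathcal{S}^*$, $u^{-1}$ is obtained by reversing the order of the letters of $u$ and replacing each $s$ by $s^{-1}$. Right reversing: for words $\mathbf{w},\mathbf{w}'$ on $\mathcal{S}\cup\mathcal{S}^{-1}$ we write $\mathbf{w}\curvearrowright_r\mathbf{w}'$ if $\mathbf{w}'$ is obtained from $\mathbf{w}$ by a finite (possibly empty) sequence of steps, each of which either deletes a subword $u^{-1}u$ with $u\in\mathcal{S}^*$ nonempty, or replaces a subword $u^{-1}v$ with $u,v\in\mathcal{S}^*$ nonempty by a word $v'u'^{-1}$ with $u',v'\in\mathcal{S}^*$ such that $uv'=vu'$ is a relation of $\mathcal{R}$. $(\mathcal{S},\mathcal{R})$ is $r$-complete if for all $u,v,u',v'\in\mathcal{S}^*$ with $uv'\equiv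 vu'$ there exist $u'',v'',w\in\mathcal{S}^*$ with $u^{-1}v\curvearrowright_r v''u''^{-1}$, $u'\equiv u''w$ and $v'\equiv v''w$. *)

theory Defs
  imports Main
begin

text \<open>Alphabet: the type 'a plays the role of the (nonempty) letter set S; positive words are
  'a list (S^*); R is a set of pairs of words, each pair (u,v) standing for the unordered
  relation u = v.\<close>

datatype 'a sletter = Pos 'a | Neg 'a

definition pw :: "'a list \<Rightarrow> 'a sletter list" where
  "pw u = map Pos u"

definition iw :: "'a list \<Rightarrow> 'a sletter list" where
  "iw u = rev (map Neg u)"

definition is_relation :: "('a list \<times> 'a list) set \<Rightarrow> 'a list \<Rightarrow> 'a list \<Rightarrow> bool" where
  "is_relation R u v \<longleftrightarrow> (u, v) \<in> R \<or> (v, u) \<in> R"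

definition positive_presentation :: "('a list \<times> 'a list) set \<Rightarrow> bool" where
  "positive_presentation R \<longleftrightarrow> (\<forall>(u, v) \<in> R. u \<noteq> [] \<and> v \<noteq> [])"

inductive pcong :: "('a list \<times> 'a list) set \<Rightarrow> 'a list \<Rightarrow> 'a list \<Rightarrow> bool"
  for R where
  base: "(u, v) \<in> R \<Longrightarrow> pcong R u v"
| refl: "pcong R u u"
| sym: "pcong R u v \<Longrightarrow> pcong R v u"
| trans: "pcong R u v \<Longrightarrow> pcong R v w \<Longrightarrow> pcong R u w"
| compat: "pcong R u v \<Longrightarrow> pcong R u' v' \<Longrightarrow> pcong R (u @ u') (v @ v')"

inductive gcong :: "('a list \<times> 'a list) set \<Rightarrow> 'a sletter list \<Rightarrow> 'a sletter list \<Rightarrow> bool"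
  for R where
  base: "(u, v) \<in> R \<Longrightarrow> gcong R (pw u) (pw v)"
| invr: "gcong R [Pos s, Neg s] []"
| invl: "gcong R [Neg s, Pos s] []"
| refl: "gcong R w w"
| sym: "gcong R w w' \<Longrightarrow> gcong R w' w"
| trans: "gcong R w1 w2 \<Longrightarrow> gcong R w2 w3 \<Longrightarrow> gcong R w1 w3"
| compat: "gcong R w1 w2 \<Longrightarrow> gcong R w1' w2' \<Longrightarrow> gcong R (w1 @ w1') (w2 @ w2')"

definition rrev_step :: "('a list \<times> 'a list) set \<Rightarrow> 'a sletter list \<Rightarrow> 'a sletter list \<Rightarrow> bool" where
  "rrev_step R w w' \<longleftrightarrow>
     (\<exists>x y u. u \<noteq> [] \<and> w = x @ iw u @ pw u @ y \<and> w' = x @ y) \<or>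
     (\<exists>x y u v u' v'. u \<noteq> [] \<and> v \<noteq> [] \<and> is_relation R (u @ v') (v @ u') \<and>
        w = x @ iw u @ pw v @ y \<and> w' = x @ pw v' @ iw u' @ y)"

definition rrev :: "('a list \<times> 'a list) set \<Rightarrow> 'a sletter list \<Rightarrow> 'a sletter list \<Rightarrow> bool" where
  "rrev R = (rrev_step R)\<^sup>*\<^sup>*"

definition r_complete :: "('a list \<times> 'a list) set \<Rightarrow> bool" where
  "r_complete R \<longleftrightarrow>
     (\<forall>u v u' v'. pcong R (u @ v') (v @ u') \<longrightarrow>
        (\<exists>u'' v'' w. rrev R (iw u @ pw v) (pw v'' @ iw u'') \<and>
                     pcong R u' (u'' @ w) \<and> pcong R v' (v'' @ w)))"

definition cond_C :: "('a list \<times> 'a list) set \<Rightarrow> bool" where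
  "cond_C R \<longleftrightarrow> \<not> (\<exists>s u v. u \<noteq> v \<and> is_relation R (s # u) (s # v))"

definition cond_E :: "('a list \<times> 'a list) set \<Rightarrow> bool" where
  "cond_E R \<longleftrightarrow> (\<exists>S' :: 'a list set. (\<forall>s. [s] \<in> S') \<and>
     (\<forall>u \<in> S'. \<forall>v \<in> S'. \<exists>u' \<in> S'. \<exists>v' \<in> S'. rrev R (iw (u @ v') @ pw (v @ u')) []))"

end

theory Submission
  imports Defs
begin

lemma pw_Nil[simp]: "pw [] = []" and pw_Cons[simp]: "pw (s # u) = Pos s # pw u"
  and pw_append[simp]: "pw (a @ b) = pw a @ pw b"
  by (simp_all add: pw_def)

lemma iw_Nil[simp]: "iw [] = []" and iw_Cons[simp]: "iw (s # u) = iw u @ [Neg s]"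
  and iw_append[simp]: "iw (a @ b) = iw b @ iw a"
  by (simp_all add: iw_def)

lemma length_pw[simp]: "length (pw u) = length u" and length_iw[simp]: "length (iw u) = length u"
  by (simp_all add: pw_def iw_def)

lemma pc_refl[simp, intro]: "pcong R u u" by (rule pcong.refl)
lemma pc_sym: "pcong R u v \<Longrightarrow> pcong R v u" by (rule pcong.sym)
lemma pc_trans[trans]: "pcong R u v \<Longrightarrow> pcong R v w \<Longrightarrow> pcong R u w" by (rule pcong.trans)
lemma pc_appL: "pcong R u v \<Longrightarrow> pcong R (x @ u) (x @ v)"
  using pcong.compat[OF pcong.refl] by blast
lemma pc_appR: "pcong R u v \<Longrightarrow> pcong R (u @ x) (v @ x)"
  using pcong.compat[OF _ pcong.refl] by blast
lemma pc_Cons: "pcong R u v \<Longrightarrow> pcong R (s # u) (s # v)"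
  using pc_appL[of R u v "[s]"] by simp
lemma pc_rel: "is_relation R u v \<Longrightarrow> pcong R u v"
  unfolding is_relation_def using pcong.base pcong.sym by blast

fun D :: "('a list \<times> 'a list) set \<Rightarrow> 'a sletter list \<Rightarrow> 'a list \<Rightarrow> 'a list \<Rightarrow> bool" where
  "D R [] p q = pcong R p q"
| "D R (Pos s # w) p q = (\<exists>q0. D R w p q0 \<and> pcong R (s # q0) q)"
| "D R (Neg s # w) p q = D R w p (s # q)"

lemma D_resp: "D R w p q \<Longrightarrow> pcong R p p' \<Longrightarrow> pcong R q q' \<Longrightarrow> D R w p' q'"
proof (induction w arbitrary: p q p' q')
  case Nil then show ?case by (auto intro: pc_trans pc_sym)
next
  case (Cons l w) show ?case
  proof (cases l)
    case (Pos s)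
    with Cons.prems obtain q0 where "D R w p q0" "pcong R (s # q0) q" by auto
    with Cons.IH[of p q0 p' q0] Cons.prems show ?thesis using Pos by (auto intro: pc_trans)
  next
    case (Neg s)
    with Cons.prems Cons.IH[of p "s # q" p' "s # q'"] show ?thesis by (auto intro: pc_Cons)
  qed
qed

lemma D_append: "D R (x @ y) p q \<longleftrightarrow> (\<exists>r. D R y p r \<and> D R x r q)"
proof (induction x arbitrary: q)
  case Nil then show ?case by (auto intro: D_resp pc_sym)
next
  case (Cons l x) then show ?case by (cases l) auto
qed

lemma D_pw: "D R (pw u) p q \<longleftrightarrow> pcong R q (u @ p)"
proof (induction u arbitrary: q)
  case Nil then show ?case by (auto intro: pc_sym)
next
  case (Cons s u) then show ?case by (auto intro: pc_trans pc_sym pc_Cons)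
qed

lemma D_iw: "D R (iw u) p q \<longleftrightarrow> pcong R p (u @ q)"
proof (induction u arbitrary: p q)
  case Nil then show ?case by auto
next
  case (Cons s u)
  have "D R (iw (s # u)) p q \<longleftrightarrow> (\<exists>r. pcong R p (s # r) \<and> pcong R r (u @ q))"
    using Cons by (simp add: D_append)
  also have "\<dots> \<longleftrightarrow> pcong R p (s # u @ q)"
    by (auto intro: pc_trans pc_Cons)
  finally show ?case by simp
qed

lemma D_ext: "D R w p q \<Longrightarrow> D R w (p @ x) (q @ x)"
proof (induction w arbitrary: p q)
  case Nil then show ?case by (auto intro: pc_appR)
next
  case (Cons l w) show ?case
  proof (cases l)
    case (Pos s)
    with Cons.prems obtain q0 where "D R w p q0" "pcong R (s # q0) q" by auto
    with Cons.IH[of p q0] show ?thesis using Pos pc_appR[of R "s # q0" q x] by auto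
  next
    case (Neg s)
    with Cons.prems Cons.IH[of p "s # q"] show ?thesis by auto
  qed
qed

lemma step_sound: "rrev_step R w w' \<Longrightarrow> D R w' p q \<Longrightarrow> D R w p q"
  unfolding rrev_step_def
proof (elim disjE exE conjE)
  fix x y u assume w: "w = x @ iw u @ pw u @ y" and w': "w' = x @ y" and d: "D R w' p q"
  from d w' obtain r where r1: "D R y p r" and r2: "D R x r q" by (auto simp: D_append)
  have "D R (iw u @ pw u) r r"
    by (auto simp: D_append D_pw D_iw intro!: exI[of _ "u @ r"])
  then show "D R w p q" using w r1 r2 by (auto simp: D_append)
next
  fix x y u v u' v'
  assume rel: "is_relation R (u @ v') (v @ u')" and w: "w = x @ iw u @ pw v @ y"
    and w': "w' = x @ pw v' @ iw u' @ y" and d: "D R w' p q"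
  from d w' obtain r r' where r1: "D R y p r" and r2: "D R x r' q"
    and m: "D R (pw v' @ iw u') r r'" by (auto simp: D_append)
  from m obtain m where m1: "pcong R r (u' @ m)" and m2: "pcong R r' (v' @ m)"
    by (auto simp: D_append D_pw D_iw)
  have "pcong R (v @ r) (u @ r')"
  proof -
    have "pcong R (v @ r) (v @ u' @ m)" by (rule pc_appL[OF m1])
    also have "pcong R (v @ u' @ m) (u @ v' @ m)"
      using pc_appR[OF pc_sym[OF pc_rel[OF rel]], of m] by simp
    also have "pcong R (u @ v' @ m) (u @ r')" by (rule pc_appL[OF pc_sym[OF m2]])
    finally show ?thesis .
  qed
  then have "D R (iw u @ pw v) r r'"
    by (auto simp: D_append D_pw D_iw intro!: exI[of _ "v @ r"])
  then show "D R w p q" using w r1 r2 by (auto simp: D_append)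
qed

lemma rrev_sound: "rrev R w w' \<Longrightarrow> D R w' p q \<Longrightarrow> D R w p q"
  unfolding rrev_def
  by (induction rule: rtranclp_induct) (auto intro: step_sound)


lemmas [trans] = gcong.trans

lemma gc_ctx: "gcong R a b \<Longrightarrow> gcong R (x @ a @ y) (x @ b @ y)"
  by (intro gcong.compat gcong.refl)

lemma gc_pw_iw: "gcong R (pw u @ iw u) []"
proof (induction u)
  case Nil then show ?case by (simp add: gcong.refl)
next
  case (Cons s u)
  have "gcong R ([Pos s] @ (pw u @ iw u) @ [Neg s]) ([Pos s] @ [] @ [Neg s])"
    by (rule gc_ctx[OF Cons])
  then have "gcong R (pw (s # u) @ iw (s # u)) [Pos s, Neg s]" by simp
  then show ?case by (rule gcong.trans[OF _ gcong.invr])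
qed

lemma gc_iw_pw: "gcong R (iw u @ pw u) []"
proof (induction u)
  case Nil then show ?case by (simp add: gcong.refl)
next
  case (Cons s u)
  have "gcong R (iw u @ [Neg s, Pos s] @ pw u) (iw u @ [] @ pw u)"
    by (rule gc_ctx[OF gcong.invl])
  then have "gcong R (iw (s # u) @ pw (s # u)) (iw u @ pw u)" by simp
  then show ?case by (rule gcong.trans[OF _ Cons])
qed

lemma gc_pc: "pcong R a b \<Longrightarrow> gcong R (pw a) (pw b)"
proof (induction rule: pcong.induct)
  case (base u v) then show ?case by (rule gcong.base)
next
  case (refl u) then show ?case by (rule gcong.refl)
next
  case (sym u v) show ?case by (rule gcong.sym[OF sym.IH])
next
  case (trans u v w) show ?case by (rule gcong.trans[OF trans.IH])
next
  case (compat u v u' v') then show ?case using gcong.compat[OF compat.IH] by simp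
qed

lemma gc_step: "rrev_step R w w' \<Longrightarrow> gcong R w w'"
  unfolding rrev_step_def
proof (elim disjE exE conjE)
  fix x y u assume "w = x @ iw u @ pw u @ y" "w' = x @ y"
  then show "gcong R w w'" using gc_ctx[OF gc_iw_pw[of R u], of x y] by simp
next
  fix x y u v u' v'
  assume rel: "is_relation R (u @ v') (v @ u')" and w: "w = x @ iw u @ pw v @ y"
    and w': "w' = x @ pw v' @ iw u' @ y"
  have r: "gcong R (pw (v @ u')) (pw (u @ v'))" by (rule gc_pc[OF pc_sym[OF pc_rel[OF rel]]])
  have "gcong R (iw u @ pw v @ []) (iw u @ pw v @ (pw u' @ iw u'))"
    using gc_ctx[OF gcong.sym[OF gc_pw_iw[of R u']], of "iw u @ pw v" "[]"] by simp
  also have "gcong R (iw u @ pw v @ (pw u' @ iw u')) (iw u @ pw (u @ v') @ iw u')"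
    using gc_ctx[OF r, of "iw u" "iw u'"] by simp
  also have "gcong R (iw u @ pw (u @ v') @ iw u') ([] @ pw v' @ iw u')"
    using gc_ctx[OF gc_iw_pw[of R u], of "[]" "pw v' @ iw u'"] by simp
  finally have "gcong R (iw u @ pw v) (pw v' @ iw u')" by simp
  from gc_ctx[OF this, of x y] show "gcong R w w'" using w w' by simp
qed


lemma gc_rrev: "rrev R w w' \<Longrightarrow> gcong R w w'"
  unfolding rrev_def
proof (induction rule: rtranclp_induct)
  case base then show ?case by (rule gcong.refl)
next
  case (step y z) show ?case by (rule gcong.trans[OF step.IH gc_step[OF step.hyps(2)]])
qed

lemma rrev_ctx: "rrev R w w' \<Longrightarrow> rrev R (x @ w @ y) (x @ w' @ y)"
proof -
  have st: "rrev_step R (x @ a @ y) (x @ b @ y)" if "rrev_step R a b" for a b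
    using that[unfolded rrev_step_def]
  proof (elim disjE exE conjE)
    fix x0 y0 u assume "u \<noteq> []" "a = x0 @ iw u @ pw u @ y0" "b = x0 @ y0"
    then show ?thesis unfolding rrev_step_def
      by (intro disjI1 exI[of _ "x @ x0"] exI[of _ "y0 @ y"] exI[of _ u]) simp
  next
    fix x0 y0 u v u' v' assume "u \<noteq> []" "v \<noteq> []" "is_relation R (u @ v') (v @ u')"
      "a = x0 @ iw u @ pw v @ y0" "b = x0 @ pw v' @ iw u' @ y0"
    then show ?thesis unfolding rrev_step_def
      by (intro disjI2 exI[of _ "x @ x0"] exI[of _ "y0 @ y"] exI[of _ u] exI[of _ v]
          exI[of _ u'] exI[of _ v']) simp
  qed
  show "rrev R w w' \<Longrightarrow> rrev R (x @ w @ y) (x @ w' @ y)"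
    unfolding rrev_def
  proof (induction rule: rtranclp_induct)
    case base then show ?case by simp
  next
    case (step b c) show ?case by (rule rtranclp.rtrancl_into_rtrancl[OF step.IH st[OF step.hyps(2)]])
  qed
qed

lemma rrev_trans: "rrev R a b \<Longrightarrow> rrev R b c \<Longrightarrow> rrev R a c"
  unfolding rrev_def by (rule rtranclp_trans)

lemma rrev_refl: "rrev R a a" unfolding rrev_def by simp

lemma CM:
  assumes "cond_E R"
  shows "\<exists>a' b'. pcong R (a @ b') (b @ a')"
proof -
  from assms obtain S where S1': "\<forall>s. [s] \<in> S"
    and S2': "\<forall>u \<in> S. \<forall>v \<in> S. \<exists>u' \<in> S. \<exists>v' \<in> S. rrev R (iw (u @ v') @ pw (v @ u')) []"
    unfolding cond_E_def by (elim exE conjE)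
  have S1: "[s] \<in> S" for s using S1' by simp
  have S2: "\<exists>u' \<in> S. \<exists>v' \<in> S. rrev R (iw (u @ v') @ pw (v @ u')) []" if "u \<in> S" "v \<in> S" for u v
    using S2' that by simp
  have S3: "\<exists>u' \<in> S. \<exists>v'. pcong R (u @ v') (v @ u')" if "u \<in> S" "v \<in> S" for u v
  proof -
    from S2[OF that] obtain u' v' where "u' \<in> S" "rrev R (iw (u @ v') @ pw (v @ u')) []"
      by blast
    moreover from this have "D R (iw (u @ v') @ pw (v @ u')) [] []"
      using rrev_sound[of R _ "[]" "[]" "[]"] by simp
    then obtain r where "pcong R r (v @ u')" "pcong R r (u @ v')"
      unfolding D_append D_pw D_iw by auto
    then have "pcong R (u @ v') (v @ u')"
      by (metis pc_sym pc_trans)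
    ultimately show ?thesis by blast
  qed
  have L1: "\<exists>a' \<in> S. \<exists>b'. pcong R (a @ b') (b @ a')" if "a \<in> S" for a b
    using that
  proof (induction b arbitrary: a)
    case Nil then show ?case by (intro bexI[of _ a] exI[of _ "[]"]) auto
  next
    case (Cons s b0)
    from S3[OF Cons.prems S1[of s]] obtain a1 c where a1: "a1 \<in> S" "pcong R (a @ c) ([s] @ a1)"
      by blast
    from Cons.IH[OF a1(1)] obtain a' b0' where "a' \<in> S" and h3: "pcong R (a1 @ b0') (b0 @ a')" by blast
    have h4: "pcong R (a @ c @ b0') (s # a1 @ b0')"
      using pc_appR[OF a1(2), of b0'] by simp
    have "pcong R (a @ c @ b0') (s # b0 @ a')" by (rule pc_trans[OF h4 pc_Cons[OF h3]])
    then have "pcong R (a @ (c @ b0')) ((s # b0) @ a')" by simp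
    then show ?case using \<open>a' \<in> S\<close> by blast
  qed
  show ?thesis
  proof (induction a arbitrary: b)
    case Nil then show ?case by (intro exI[of _ b] exI[of _ "[]"]) auto
  next
    case (Cons s a0)
    from L1[OF S1[of s], of b] obtain a1 b1 where h1: "pcong R ([s] @ b1) (b @ a1)" by blast
    from Cons.IH[of b1] obtain x y where h2: "pcong R (a0 @ y) (b1 @ x)" by blast
    have "pcong R (s # a0 @ y) (s # b1 @ x)" by (rule pc_Cons[OF h2])
    also have "pcong R (s # b1 @ x) (b @ a1 @ x)" using pc_appR[OF h1, of x] by simp
    finally have "pcong R ((s # a0) @ y) (b @ a1 @ x)" by simp
    then show ?case by blast
  qed
qed

fun allneg :: "'a sletter list \<Rightarrow> bool" where
  "allneg [] = True" | "allneg (Pos _ # w) = False" | "allneg (Neg _ # w) = allneg w"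
fun okf :: "'a sletter list \<Rightarrow> bool" where
  "okf [] = True" | "okf (Pos _ # w) = okf w" | "okf (Neg _ # w) = allneg w"

lemma allneg_append[simp]: "allneg (a @ b) \<longleftrightarrow> allneg a \<and> allneg b"
proof (induction a)
  case (Cons l a) then show ?case by (cases l) auto
qed simp

lemma allneg_iw: "allneg (iw u)" by (induction u) auto

lemma allneg_okf: "allneg w \<Longrightarrow> okf w"
  by (cases w rule: allneg.cases) auto

lemma okf_pw_iw: "okf (pw a @ iw b)"
  by (induction a) (auto intro: allneg_okf allneg_iw)

lemma not_allneg: "\<not> allneg (x @ Pos b # y)"
proof (induction x)
  case (Cons l x) then show ?case by (cases l) auto
qed simp

lemma not_okf: "\<not> okf (x @ Neg a # Pos b # y)"
proof (induction x)
  case Nil then show ?case by simp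
next
  case (Cons l x) then show ?case
    by (cases l) (auto simp: not_allneg[of "x @ [Neg a]", simplified])
qed

lemma step_not_okf: "rrev_step R w w' \<Longrightarrow> \<not> okf w"
  unfolding rrev_step_def
proof (elim disjE exE conjE)
  fix x y u assume "u \<noteq> []" "w = x @ iw u @ pw u @ y"
  then obtain a u0 where "u = a # u0" by (cases u) auto
  then have "w = (x @ iw u0) @ Neg a # Pos a # (pw u0 @ y)" using \<open>w = _\<close> by simp
  then show "\<not> okf w" using not_okf by metis
next
  fix x y u v u' v' assume "u \<noteq> []" "v \<noteq> []" "w = x @ iw u @ pw v @ y"
  then obtain a u0 b v0 where "u = a # u0" "v = b # v0" by (cases u; cases v) auto
  then have "w = (x @ iw u0) @ Neg a # Pos b # (pw v0 @ y)" using \<open>w = _\<close> by simp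
  then show "\<not> okf w" using not_okf by metis
qed

lemma rrev_okf: "rrev R w w' \<Longrightarrow> okf w \<Longrightarrow> w' = w"
  unfolding rrev_def
  by (erule converse_rtranclpE) (auto dest: step_not_okf)

fun posl :: "'a sletter list \<Rightarrow> 'a list" where
  "posl [] = []" | "posl (Pos a # w) = a # posl w" | "posl (Neg a # w) = posl w"
fun negl :: "'a sletter list \<Rightarrow> 'a list" where
  "negl [] = []" | "negl (Pos a # w) = negl w" | "negl (Neg a # w) = a # negl w"

lemma posl_append[simp]: "posl (a @ b) = posl a @ posl b"
proof (induction a)
  case (Cons l a) then show ?case by (cases l) auto
qed simp
lemma negl_append[simp]: "negl (a @ b) = negl a @ negl b"
proof (induction a)
  case (Cons l a) then show ?case by (cases l) auto
qed simp
lemma posl_pw[simp]: "posl (pw a) = a" by (induction a) auto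
lemma negl_pw[simp]: "negl (pw a) = []" by (induction a) auto
lemma posl_iw[simp]: "posl (iw a) = []" by (induction a) auto
lemma negl_iw[simp]: "negl (iw a) = rev a" by (induction a) auto

lemma pw_iw_inj: "pw a @ iw b = pw c @ iw d \<Longrightarrow> a = c \<and> b = d"
proof -
  assume h: "pw a @ iw b = pw c @ iw d"
  have "posl (pw a @ iw b) = posl (pw c @ iw d)" "negl (pw a @ iw b) = negl (pw c @ iw d)"
    using h by simp_all
  then show ?thesis by simp
qed

lemma NP_step:
  assumes C: "cond_C R" and st: "rrev_step R [Neg s, Pos s] w1"
  shows "\<exists>t. w1 = pw t @ iw t"
  using st unfolding rrev_step_def
proof (elim disjE exE conjE)
  fix x y u assume "u \<noteq> []" "[Neg s, Pos s] = x @ iw u @ pw u @ y" "w1 = x @ y"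
  moreover from arg_cong[where f=length, OF this(2)] have "length x + 2 * length u + length y = 2"
    by simp
  ultimately have "w1 = pw [] @ iw []" by (cases u) auto
  then show ?thesis by blast
next
  fix x y u v u' v' assume u: "u \<noteq> []" and v: "v \<noteq> []" and rel: "is_relation R (u @ v') (v @ u')"
    and e: "[Neg s, Pos s] = x @ iw u @ pw v @ y" and w1: "w1 = x @ pw v' @ iw u' @ y"
  from arg_cong[where f=length, OF e] have len: "length x + length u + length v + length y = 2"
    by simp
  with u v have "x = [] \<and> y = [] \<and> length u = 1 \<and> length v = 1"
    by (cases u; cases v) auto
  then obtain a b where xy: "x = []" "y = []" and ab: "u = [a]" "v = [b]"
    by (auto simp: length_Suc_conv)
  with e have "a = s" "b = s" by auto
  with rel ab C have "v' = u'" unfolding cond_C_def by auto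
  with w1 xy show ?thesis by auto
qed

lemma NP_rrev:
  assumes C: "cond_C R" and r: "rrev R [Neg s, Pos s] (pw a @ iw b)"
  shows "a = b"
proof -
  have "[Neg s, Pos s] = [] @ Neg s # Pos s # []" by simp
  then have nok: "\<not> okf ([Neg s, Pos s] :: 'a sletter list)" using not_okf by metis
  from r[unfolded rrev_def] show ?thesis
  proof (cases rule: converse_rtranclpE)
    case base
    then show ?thesis using okf_pw_iw[of a b] nok by simp
  next
    case (step w1)
    from NP_step[OF C step(1)] obtain t where t: "w1 = pw t @ iw t" by blast
    with step(2) rrev_okf[of R w1 "pw a @ iw b"] okf_pw_iw[of t t] have "pw a @ iw b = pw t @ iw t"
      unfolding rrev_def by simp
    then show ?thesis using pw_iw_inj by blast
  qed
qed

lemma lcancel1: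
  assumes C: "cond_C R" and Rc: "r_complete R" and h: "pcong R (s # u) (s # v)"
  shows "pcong R u v"
proof -
  from h have "pcong R ([s] @ u) ([s] @ v)" by simp
  with Rc obtain u'' v'' w where r: "rrev R (iw [s] @ pw [s]) (pw v'' @ iw u'')"
    and h1: "pcong R v (u'' @ w)" and h2: "pcong R u (v'' @ w)"
    unfolding r_complete_def by blast
  from r have "rrev R [Neg s, Pos s] (pw v'' @ iw u'')" by simp
  from NP_rrev[OF C this] have "v'' = u''" .
  with h1 h2 show ?thesis by (metis pc_sym pc_trans)
qed

lemma lcancel:
  assumes C: "cond_C R" and Rc: "r_complete R"
  shows "pcong R (z @ u) (z @ v) \<Longrightarrow> pcong R u v"
proof (induction z)
  case (Cons s z) then show ?case using lcancel1[OF C Rc, of s "z @ u" "z @ v"] by simp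
qed simp

lemma F3:
  assumes E: "cond_E R" and Rc: "r_complete R"
  shows "\<exists>v u. rrev R (iw a @ pw b) (pw v @ iw u)"
proof -
  from CM[OF E, of a b] obtain a' b' where "pcong R (a @ b') (b @ a')" by blast
  with Rc show ?thesis unfolding r_complete_def by blast
qed

lemma F4:
  assumes E: "cond_E R" and Rc: "r_complete R"
  shows "\<exists>v u. rrev R w (pw v @ iw u)"
proof (induction w)
  case Nil
  have "rrev R [] (pw [] @ iw [])" by (simp add: rrev_refl)
  then show ?case by blast
next
  case (Cons l w)
  then obtain v u where r: "rrev R w (pw v @ iw u)" by blast
  show ?case
  proof (cases l)
    case (Pos s)
    from rrev_ctx[OF r, of "[Pos s]" "[]"] have "rrev R (l # w) (pw (s # v) @ iw u)"
      using Pos by simp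
    then show ?thesis by blast
  next
    case (Neg s)
    from rrev_ctx[OF r, of "[Neg s]" "[]"] have r1: "rrev R (l # w) (iw [s] @ pw v @ iw u)"
      using Neg by simp
    from F3[OF E Rc, of "[s]" v] obtain v1 u1 where "rrev R (iw [s] @ pw v) (pw v1 @ iw u1)"
      by blast
    from rrev_ctx[OF this, of "[]" "iw u"] have "rrev R (iw [s] @ pw v @ iw u) (pw v1 @ iw (u @ u1))"
      by simp
    from rrev_trans[OF r1 this] show ?thesis by blast
  qed
qed

definition fr :: "('a list \<times> 'a list) set \<Rightarrow> 'a list \<Rightarrow> 'a list \<Rightarrow> 'a list \<Rightarrow> 'a list \<Rightarrow> bool" where
  "fr R q p q' p' \<longleftrightarrow> (\<exists>x x'. pcong R (p @ x) (p' @ x') \<and> pcong R (q @ x) (q' @ x'))"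

lemma fr_sym: "fr R q p q' p' \<Longrightarrow> fr R q' p' q p"
  unfolding fr_def by (meson pc_sym)

lemma fr_trans:
  assumes E: "cond_E R" and h1: "fr R q1 p1 q2 p2" and h2: "fr R q2 p2 q3 p3"
  shows "fr R q1 p1 q3 p3"
proof -
  from h1 obtain x x' where a1: "pcong R (p1 @ x) (p2 @ x')" and b1: "pcong R (q1 @ x) (q2 @ x')"
    unfolding fr_def by blast
  from h2 obtain y y' where a2: "pcong R (p2 @ y) (p3 @ y')" and b2: "pcong R (q2 @ y) (q3 @ y')"
    unfolding fr_def by blast
  from CM[OF E, of x' y] obtain a b where c: "pcong R (x' @ a) (y @ b)" by blast
  have "pcong R (p1 @ x @ a) (p2 @ x' @ a)" using pc_appR[OF a1, of a] by simp
  also have "pcong R (p2 @ x' @ a) (p2 @ y @ b)" by (rule pc_appL[OF c])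
  also have "pcong R (p2 @ y @ b) (p3 @ y' @ b)" using pc_appR[OF a2, of b] by simp
  finally have A: "pcong R (p1 @ x @ a) (p3 @ y' @ b)" .
  have "pcong R (q1 @ x @ a) (q2 @ x' @ a)" using pc_appR[OF b1, of a] by simp
  also have "pcong R (q2 @ x' @ a) (q2 @ y @ b)" by (rule pc_appL[OF c])
  also have "pcong R (q2 @ y @ b) (q3 @ y' @ b)" using pc_appR[OF b2, of b] by simp
  finally have B: "pcong R (q1 @ x @ a) (q3 @ y' @ b)" .
  from A B show ?thesis unfolding fr_def by blast
qed

lemma fr_eq:
  assumes E: "cond_E R" and h1: "pcong R p q" and h2: "pcong R p' q'"
  shows "fr R q p q' p'"
proof -
  from CM[OF E, of p p'] obtain x' x where c: "pcong R (p @ x) (p' @ x')" by blast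
  have "pcong R (q @ x) (p @ x)" by (rule pc_appR[OF pc_sym[OF h1]])
  also note c
  also have "pcong R (p' @ x') (q' @ x')" by (rule pc_appR[OF h2])
  finally show ?thesis using c unfolding fr_def by blast
qed

lemma D_unique:
  assumes E: "cond_E R" and C: "cond_C R" and Rc: "r_complete R"
  shows "D R w p q \<Longrightarrow> D R w p' q' \<Longrightarrow> fr R q p q' p'"
proof (induction w arbitrary: p q p' q')
  case Nil then show ?case using fr_eq[OF E] by simp
next
  case (Cons l w)
  show ?case
  proof (cases l)
    case (Pos s)
    with Cons.prems obtain q0 q0' where d: "D R w p q0" "D R w p' q0'"
      and e: "pcong R (s # q0) q" "pcong R (s # q0') q'" by auto
    from Cons.IH[OF d] obtain x x' where a: "pcong R (p @ x) (p' @ x')"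
      and b: "pcong R (q0 @ x) (q0' @ x')" unfolding fr_def by blast
    have "pcong R (q @ x) (s # q0 @ x)" using pc_appR[OF pc_sym[OF e(1)], of x] by simp
    also have "pcong R (s # q0 @ x) (s # q0' @ x')" by (rule pc_Cons[OF b])
    also have "pcong R (s # q0' @ x') (q' @ x')" using pc_appR[OF e(2), of x'] by simp
    finally show ?thesis using a unfolding fr_def by blast
  next
    case (Neg s)
    with Cons.prems have d: "D R w p (s # q)" "D R w p' (s # q')" by auto
    from Cons.IH[OF d] obtain x x' where a: "pcong R (p @ x) (p' @ x')"
      and b: "pcong R (s # q @ x) (s # q' @ x')" unfolding fr_def by auto
    from lcancel1[OF C Rc b] a show ?thesis unfolding fr_def by blast
  qed
qed

lemma D_nonempty:
  assumes E: "cond_E R"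
  shows "\<exists>p q. D R w p q"
proof (induction w)
  case Nil then show ?case by (auto intro: exI[of _ "[]"])
next
  case (Cons l w)
  then obtain p q where d: "D R w p q" by blast
  show ?case
  proof (cases l)
    case (Pos s)
    with d show ?thesis by auto
  next
    case (Neg s)
    from CM[OF E, of q "[s]"] obtain y x where c: "pcong R (q @ x) ([s] @ y)" by blast
    from D_resp[OF D_ext[OF d, of x] pc_refl c] have "D R w (p @ x) (s # y)" by simp
    with Neg show ?thesis by auto
  qed
qed

definition Cg :: "('a list \<times> 'a list) set \<Rightarrow> 'a sletter list \<Rightarrow> 'a sletter list \<Rightarrow> bool" where
  "Cg R w w' \<longleftrightarrow> (\<forall>p q p' q'. D R w p q \<longrightarrow> D R w' p' q' \<longrightarrow> fr R q p q' p')"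

lemma gc_Cg:
  assumes E: "cond_E R" and C: "cond_C R" and Rc: "r_complete R"
  shows "gcong R w w' \<Longrightarrow> Cg R w w'"
proof (induction rule: gcong.induct)
  case (base u v)
  show ?case unfolding Cg_def
  proof (intro allI impI)
    fix p q p' q' assume "D R (pw u) p q" "D R (pw v) p' q'"
    then have h1: "pcong R q (u @ p)" and h2: "pcong R q' (v @ p')" by (simp_all add: D_pw)
    from CM[OF E, of p p'] obtain x' x where c: "pcong R (p @ x) (p' @ x')" by blast
    have "pcong R (q @ x) (u @ p @ x)" using pc_appR[OF h1, of x] by simp
    also have "pcong R (u @ p @ x) (v @ p @ x)" by (rule pc_appR[OF pcong.base[OF base]])
    also have "pcong R (v @ p @ x) (v @ p' @ x')" by (rule pc_appL[OF c])
    also have "pcong R (v @ p' @ x') (q' @ x')" using pc_appR[OF pc_sym[OF h2], of x'] by simp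
    finally show "fr R q p q' p'" using c unfolding fr_def by blast
  qed
next
  case (invr s)
  show ?case unfolding Cg_def
  proof (intro allI impI)
    fix p q p' q' assume "D R [Pos s, Neg s] p q" "D R [] p' q'"
    then obtain q0 where "pcong R p (s # q0)" "pcong R (s # q0) q" "pcong R p' q'" by auto
    then show "fr R q p q' p'" using fr_eq[OF E] pc_trans by metis
  qed
next
  case (invl s)
  show ?case unfolding Cg_def
  proof (intro allI impI)
    fix p q p' q' assume "D R [Neg s, Pos s] p q" "D R [] p' q'"
    then obtain q0 where "pcong R p q0" "pcong R (s # q0) (s # q)" "pcong R p' q'" by auto
    then have "pcong R p q" "pcong R p' q'" using lcancel1[OF C Rc] pc_trans by metis+
    then show "fr R q p q' p'" using fr_eq[OF E] by blast
  qed
next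
  case (refl w)
  show ?case unfolding Cg_def using D_unique[OF E C Rc] by blast
next
  case (sym w w')
  then show ?case unfolding Cg_def using fr_sym by blast
next
  case (trans w1 w2 w3)
  show ?case unfolding Cg_def
  proof (intro allI impI)
    fix p q p' q' assume d1: "D R w1 p q" and d3: "D R w3 p' q'"
    from D_nonempty[OF E, of w2] obtain p2 q2 where d2: "D R w2 p2 q2" by blast
    from trans.IH(1)[unfolded Cg_def, rule_format, OF d1 d2]
      trans.IH(2)[unfolded Cg_def, rule_format, OF d2 d3]
    show "fr R q p q' p'" by (rule fr_trans[OF E])
  qed
next
  case (compat w1 w2 w1' w2')
  show ?case unfolding Cg_def
  proof (intro allI impI)
    fix p q p' q' assume d1: "D R (w1 @ w1') p q" and d2: "D R (w2 @ w2') p' q'"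
    from d1 obtain r where r1: "D R w1' p r" "D R w1 r q" by (auto simp: D_append)
    from d2 obtain r' where r2: "D R w2' p' r'" "D R w2 r' q'" by (auto simp: D_append)
    from compat.IH(2)[unfolded Cg_def, rule_format, OF r1(1) r2(1)] obtain x x'
      where a: "pcong R (p @ x) (p' @ x')" and b: "pcong R (r @ x) (r' @ x')"
      unfolding fr_def by blast
    have e1: "D R w1 (r @ x) (q @ x)" by (rule D_ext[OF r1(2)])
    have e2: "D R w2 (r @ x) (q' @ x')"
      by (rule D_resp[OF D_ext[OF r2(2), of x'] pc_sym[OF b] pc_refl])
    from compat.IH(1)[unfolded Cg_def, rule_format, OF e1 e2] obtain y y'
      where c1: "pcong R (r @ x @ y) (r @ x @ y')" and c2: "pcong R (q @ x @ y) (q' @ x' @ y')"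
      unfolding fr_def by auto
    from lcancel[OF C Rc lcancel[OF C Rc c1]] have yy: "pcong R y y'" .
    have "pcong R (p @ x @ y) (p' @ x' @ y)" using pc_appR[OF a, of y] by simp
    moreover have "pcong R (q @ x @ y) (q' @ x' @ y)"
      using pc_trans[OF c2 pc_appL[OF pc_sym[OF yy], of "q' @ x'", simplified]] by simp
    ultimately show "fr R q p q' p'" unfolding fr_def by (metis append.assoc)
  qed
qed

lemma gc_pc_iw: "pcong R a b \<Longrightarrow> gcong R (iw a) (iw b)"
proof -
  assume h: "pcong R a b"
  have 1: "gcong R (iw a) (iw a @ pw b @ iw b)"
    using gc_ctx[OF gcong.sym[OF gc_pw_iw[of R b]], of "iw a" "[]"] by simp
  have 2: "gcong R (iw a @ pw b @ iw b) (iw a @ pw a @ iw b)"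
    using gc_ctx[OF gc_pc[OF pc_sym[OF h]], of "iw a" "iw b"] by simp
  have 3: "gcong R (iw a @ pw a @ iw b) (iw b)"
    using gc_ctx[OF gc_iw_pw[of R a], of "[]" "iw b"] by simp
  show ?thesis by (rule gcong.trans[OF gcong.trans[OF 1 2] 3])
qed

lemma frac_gc:
  assumes a: "pcong R (u @ x) (u' @ x')" and b: "pcong R (v @ x) (v' @ x')"
  shows "gcong R (pw v @ iw u) (pw v' @ iw u')"
proof -
  have 1: "gcong R (pw v @ iw u) (pw (v @ x) @ iw (u @ x))"
    using gc_ctx[OF gcong.sym[OF gc_pw_iw[of R x]], of "pw v" "iw u"] by simp
  have 2: "gcong R (pw (v @ x) @ iw (u @ x)) (pw (v' @ x') @ iw (u @ x))"
    using gc_ctx[OF gc_pc[OF b], of "[]" "iw (u @ x)"] by simp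
  have 3: "gcong R (pw (v' @ x') @ iw (u @ x)) (pw (v' @ x') @ iw (u' @ x'))"
    using gc_ctx[OF gc_pc_iw[OF a], of "pw (v' @ x')" "[]"] by simp
  have 4: "gcong R (pw (v' @ x') @ iw (u' @ x')) (pw v' @ iw u')"
    using gc_ctx[OF gc_pw_iw[of R x'], of "pw v'" "iw u'"] by simp
  show ?thesis by (rule gcong.trans[OF gcong.trans[OF gcong.trans[OF 1 2] 3] 4])
qed

lemma D_frac: "D R (pw v @ iw u) u v"
  by (auto simp: D_append D_pw D_iw intro!: exI[of _ "[]"])

theorem proposition7p3:
  fixes R :: "('a list \<times> 'a list) set"
  assumes "positive_presentation R"
    and "r_complete R"
    and "cond_C R"
    and "cond_E R"
  shows "(\<forall>w w'. gcong R w w' \<longleftrightarrow>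
            (\<exists>u v x u' v' x'. rrev R w (pw v @ iw u) \<and> rrev R w' (pw v' @ iw u') \<and>
               pcong R (u @ x) (u' @ x') \<and> pcong R (v @ x) (v' @ x')))
       \<and> (\<forall>u u'. gcong R (pw u) (pw u') \<longleftrightarrow> (\<exists>x. pcong R (u @ x) (u' @ x)))"
proof (intro conjI allI iffI)
  note Rc = assms(2) and C = assms(3) and E = assms(4)
  fix w w'
  {
    assume g: "gcong R w w'"
    from F4[OF E Rc, of w] obtain v u where r: "rrev R w (pw v @ iw u)" by blast
    from F4[OF E Rc, of w'] obtain v' u' where r': "rrev R w' (pw v' @ iw u')" by blast
    have d: "D R w u v" by (rule rrev_sound[OF r D_frac])
    have d': "D R w' u' v'" by (rule rrev_sound[OF r' D_frac])
    from gc_Cg[OF E C Rc g, unfolded Cg_def, rule_format, OF d d'] r r'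
    show "\<exists>u v x u' v' x'. rrev R w (pw v @ iw u) \<and> rrev R w' (pw v' @ iw u') \<and>
               pcong R (u @ x) (u' @ x') \<and> pcong R (v @ x) (v' @ x')"
      unfolding fr_def by blast
  }
  {
    assume "\<exists>u v x u' v' x'. rrev R w (pw v @ iw u) \<and> rrev R w' (pw v' @ iw u') \<and>
               pcong R (u @ x) (u' @ x') \<and> pcong R (v @ x) (v' @ x')"
    then obtain u v x u' v' x' where r: "rrev R w (pw v @ iw u)" and r': "rrev R w' (pw v' @ iw u')"
      and a: "pcong R (u @ x) (u' @ x')" and b: "pcong R (v @ x) (v' @ x')" by blast
    show "gcong R w w'"
      by (rule gcong.trans[OF gcong.trans[OF gc_rrev[OF r] frac_gc[OF a b]] gcong.sym[OF gc_rrev[OF r']]])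
  }
next
  note Rc = assms(2) and C = assms(3) and E = assms(4)
  fix u u'
  {
    assume g: "gcong R (pw u) (pw u')"
    have d: "D R (pw u) [] u" "D R (pw u') [] u'" by (simp_all add: D_pw)
    from gc_Cg[OF E C Rc g, unfolded Cg_def, rule_format, OF d] obtain x x'
      where a: "pcong R x x'" and b: "pcong R (u @ x) (u' @ x')" unfolding fr_def by auto
    have "pcong R (u @ x) (u' @ x)" by (rule pc_trans[OF b pc_appL[OF pc_sym[OF a]]])
    then show "\<exists>x. pcong R (u @ x) (u' @ x)" by blast
  }
  {
    assume "\<exists>x. pcong R (u @ x) (u' @ x)"
    then obtain x where b: "pcong R (u @ x) (u' @ x)" by blast
    from frac_gc[of R "[]" x "[]" x u u', OF pc_refl b] show "gcong R (pw u) (pw u')" by simp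
  }
qed

end
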